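(* Let $T$ be a tree of order $t\ge 2$ and let $\pi=(d_1,\dots,d_n)$ be a nonincreasing graphic sequence with $n\ge t$. If $d_{t-1}\ge t-1$, then $\pi$ is potentially $T$-graphic.
   Context: All graphs are finite and simple. A sequence of nonnegative integers $\pi=(d_1,\dots,d_n)$ with $d_1\ge d_2\ge\dots\ge d_n$ is graphic if some graph of order $n$ has degree sequence $\pi$; such a graph is a realization of $\pi$. For a graph $H$, a graphic sequence $\pi$ is potentially $H$-graphic if some realization of $\pi$ contains $H$ as a subgraph. *)

theory Defs
  imports Main
begin

definition simple_graph :: "'a set \<Rightarrow> 'a set set \<Rightarrow> bool" where
  "simple_graph V E \<longleftrightarrow> finite V \<and>
     (\<forall>e\<in>E. \<exists>u v. u \<in> V \<and> v \<in> V \<and> u \<noteq> v \<and> e = {u, v})"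

definition adj :: "'a set set \<Rightarrow> 'a \<Rightarrow> 'a \<Rightarrow> bool" where
  "adj E u v \<longleftrightarrow> u \<noteq> v \<and> {u, v} \<in> E"

definition connected_graph :: "'a set \<Rightarrow> 'a set set \<Rightarrow> bool" where
  "connected_graph V E \<longleftrightarrow> (\<forall>u\<in>V. \<forall>v\<in>V. (adj E)\<^sup>*\<^sup>* u v)"

definition has_cycle :: "'a set \<Rightarrow> 'a set set \<Rightarrow> bool" where
  "has_cycle V E \<longleftrightarrow> (\<exists>vs. length vs \<ge> 3 \<and> distinct vs \<and> set vs \<subseteq> V \<and>
      (\<forall>i. i + 1 < length vs \<longrightarrow> adj E (vs ! i) (vs ! (i + 1))) \<and>
      adj E (last vs) (hd vs))"

definition is_tree :: "'a set \<Rightarrow> 'a set set \<Rightarrow> bool" where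
  "is_tree V E \<longleftrightarrow> simple_graph V E \<and> V \<noteq> {} \<and> connected_graph V E \<and> \<not> has_cycle V E"

definition degree :: "'a set set \<Rightarrow> 'a \<Rightarrow> nat" where
  "degree E v = card {e \<in> E. v \<in> e}"

text \<open>A realization of d = (d_1,...,d_n) (0-indexed list): a simple graph on {0..<n}
  in which vertex i has degree d ! i.\<close>
definition is_realization :: "nat list \<Rightarrow> nat set set \<Rightarrow> bool" where
  "is_realization d E \<longleftrightarrow> simple_graph {0..<length d} E \<and>
     (\<forall>i < length d. degree E i = d ! i)"

definition graphic :: "nat list \<Rightarrow> bool" where
  "graphic d \<longleftrightarrow> (\<exists>E. is_realization d E)"

definition nonincreasing :: "nat list \<Rightarrow> bool" where
  "nonincreasing d \<longleftrightarrow> sorted_wrt (\<ge>) d"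

definition contains_subgraph :: "'a set \<Rightarrow> 'a set set \<Rightarrow> 'b set \<Rightarrow> 'b set set \<Rightarrow> bool" where
  "contains_subgraph VH EH V E \<longleftrightarrow> (\<exists>f. inj_on f VH \<and> f ` VH \<subseteq> V \<and>
      (\<forall>u\<in>VH. \<forall>v\<in>VH. {u, v} \<in> EH \<longrightarrow> {f u, f v} \<in> E))"

definition potentially_graphic :: "'a set \<Rightarrow> 'a set set \<Rightarrow> nat list \<Rightarrow> bool" where
  "potentially_graphic VH EH d \<longleftrightarrow> graphic d \<and>
     (\<exists>E. is_realization d E \<and> contains_subgraph VH EH {0..<length d} E)"

end

theory Submission
  imports Defs
begin


lemma sg_edge: "simple_graph V E \<Longrightarrow> {u,v} \<in> E \<Longrightarrow> u \<noteq> v \<and> u \<in> V \<and> v \<in> V"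
  unfolding simple_graph_def by (metis doubleton_eq_iff)

lemma adj_sym: "adj E u v \<Longrightarrow> adj E v u"
  unfolding adj_def by (auto simp: insert_commute)

definition is_path :: "'a set \<Rightarrow> 'a set set \<Rightarrow> 'a list \<Rightarrow> bool" where
  "is_path V E vs \<longleftrightarrow> distinct vs \<and> set vs \<subseteq> V \<and>
      (\<forall>i. i + 1 < length vs \<longrightarrow> adj E (vs ! i) (vs ! (i + 1)))"

lemma tree_leaf:
  assumes T: "is_tree VT ET" and c2: "card VT \<ge> 2"
  shows "\<exists>l p. l \<in> VT \<and> p \<in> VT \<and> l \<noteq> p \<and> {l,p} \<in> ET \<and> (\<forall>w. {l,w} \<in> ET \<longrightarrow> w = p)"
proof -
  have sg: "simple_graph VT ET" and fin: "finite VT" and con: "connected_graph VT ET"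
    and nc: "\<not> has_cycle VT ET"
    using T unfolding is_tree_def simple_graph_def by auto
  obtain u v where uv: "u \<in> VT" "v \<in> VT" "u \<noteq> v"
    using c2 card_le_Suc0_iff_eq[OF fin] by fastforce
  have "(adj ET)\<^sup>*\<^sup>* u v" using con uv unfolding connected_graph_def by auto
  then obtain w where w: "adj ET u w" using uv(3) by (metis converse_rtranclpE)
  have wV: "w \<in> VT" using w sg_edge[OF sg] unfolding adj_def by blast
  have p0: "is_path VT ET [u,w]" using w uv wV unfolding is_path_def adj_def
    by (auto simp: less_Suc_eq)
  have bnd: "\<forall>y. is_path VT ET y \<longrightarrow> length y < card VT + 1"
    using fin unfolding is_path_def by (metis card_mono distinct_card less_Suc_eq_le Suc_eq_plus1)
  obtain vs where vs: "is_path VT ET vs" and mx: "\<forall>y. is_path VT ET y \<longrightarrow> length y \<le> length vs"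
    using ex_has_greatest_nat[of "is_path VT ET" "[u,w]" length, OF p0 bnd] by blast
  have len: "length vs \<ge> 2" using mx p0 by fastforce
  define x where "x = vs ! 0"
  define p where "p = vs ! 1"
  have dist: "distinct vs" and sub: "set vs \<subseteq> VT"
    and ad: "\<And>i. i + 1 < length vs \<Longrightarrow> adj ET (vs ! i) (vs ! (i + 1))"
    using vs unfolding is_path_def by auto
  have xp: "adj ET x p" using ad[of 0] len unfolding x_def p_def by auto
  have xV: "x \<in> VT" "p \<in> VT" proof -
    have "0 < length vs" "1 < length vs" using len by auto
    then show "x \<in> VT" "p \<in> VT" using sub unfolding x_def p_def by (meson nth_mem subsetD)+
  qed
  have leaf: "w' = p" if e: "{x,w'} \<in> ET" for w'
  proof (rule ccontr)
    assume ne: "w' \<noteq> p"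
    have xw: "adj ET x w'" using e sg_edge[OF sg e] unfolding adj_def by auto
    have w'V: "w' \<in> VT" using sg_edge[OF sg e] by auto
    show False
    proof (cases "w' \<in> set vs")
      case False
      have "is_path VT ET (w' # vs)"
        unfolding is_path_def
      proof (intro conjI allI impI)
        show "distinct (w' # vs)" using False dist by auto
        show "set (w' # vs) \<subseteq> VT" using sub w'V by auto
        fix i assume i: "i + 1 < length (w' # vs)"
        show "adj ET ((w' # vs) ! i) ((w' # vs) ! (i + 1))"
        proof (cases i)
          case 0 then show ?thesis using adj_sym[OF xw] unfolding x_def by simp
        next
          case (Suc j) then show ?thesis using ad[of j] i by simp
        qed
      qed
      then show False using mx by fastforce
    next
      case True
      then obtain i where i: "i < length vs" "vs ! i = w'" by (metis in_set_conv_nth)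
      have i0: "i \<noteq> 0" using xw i unfolding x_def adj_def by (metis)
      have i1: "i \<noteq> 1" using ne i unfolding p_def by auto
      define cs where "cs = take (i+1) vs"
      have "has_cycle VT ET"
        unfolding has_cycle_def
      proof (intro exI[of _ cs] conjI allI impI)
        show "3 \<le> length cs" using i i0 i1 unfolding cs_def by auto
        show "distinct cs" using dist unfolding cs_def by auto
        show "set cs \<subseteq> VT" using sub set_take_subset unfolding cs_def by fastforce
        fix j assume "j + 1 < length cs"
        then show "adj ET (cs ! j) (cs ! (j + 1))" using ad[of j] i unfolding cs_def by auto
      next
        have "last cs = w'" using i unfolding cs_def by (simp add: take_Suc_conv_app_nth)
        moreover have "hd cs = x" using i unfolding cs_def x_def by (cases vs) auto
        ultimately show "adj ET (last cs) (hd cs)" using adj_sym[OF xw] by simp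
      qed
      then show False using nc by simp
    qed
  qed
  show ?thesis using xp xV leaf unfolding adj_def by blast
qed

lemma tree_remove:
  assumes T: "is_tree VT ET" and c2: "card VT \<ge> 2" and l: "l \<in> VT" "p \<in> VT" "l \<noteq> p"
    and lp: "{l,p} \<in> ET" and lf: "\<forall>w. {l,w} \<in> ET \<longrightarrow> w = p"
  shows "is_tree (VT - {l}) {e \<in> ET. l \<notin> e}"
proof -
  let ?E = "{e \<in> ET. l \<notin> e}"
  have sg: "simple_graph VT ET" and fin: "finite VT" and con: "connected_graph VT ET"
    and nc: "\<not> has_cycle VT ET"
    using T unfolding is_tree_def simple_graph_def by auto
  have sg': "simple_graph (VT - {l}) ?E" using sg unfolding simple_graph_def by fastforce
  have ne: "VT - {l} \<noteq> {}" using l by auto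
  have adjl: "w = p" if "adj ET l w" for w using that lf unfolding adj_def by auto
  have key: "(adj ET)\<^sup>*\<^sup>* u v \<Longrightarrow> u \<noteq> l \<Longrightarrow>
     (v \<noteq> l \<longrightarrow> (adj ?E)\<^sup>*\<^sup>* u v) \<and> (v = l \<longrightarrow> (adj ?E)\<^sup>*\<^sup>* u p)" for u v
  proof (induction rule: rtranclp_induct)
    case base then show ?case by auto
  next
    case (step y z)
    show ?case
    proof (intro conjI impI)
      assume zl: "z \<noteq> l"
      show "(adj ?E)\<^sup>*\<^sup>* u z"
      proof (cases "y = l")
        case True
        then have "z = p" using adjl step(2) by auto
        then show ?thesis using step True by auto
      next
        case False
        have "adj ?E y z" using step(2) False zl unfolding adj_def by auto
        then show ?thesis using step False by (meson rtranclp.rtrancl_into_rtrancl)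
      qed
    next
      assume zl: "z = l"
      have "y = p" using adjl adj_sym[OF step(2)] zl by auto
      moreover have "y \<noteq> l" using step(2) zl unfolding adj_def by auto
      ultimately show "(adj ?E)\<^sup>*\<^sup>* u p" using step by auto
    qed
  qed
  have con': "connected_graph (VT - {l}) ?E"
    unfolding connected_graph_def
  proof (intro ballI)
    fix u v assume "u \<in> VT - {l}" "v \<in> VT - {l}"
    then show "(adj ?E)\<^sup>*\<^sup>* u v" using key[of u v] con unfolding connected_graph_def by auto
  qed
  have nc': "\<not> has_cycle (VT - {l}) ?E"
  proof
    assume "has_cycle (VT - {l}) ?E"
    then have "has_cycle VT ET" unfolding has_cycle_def adj_def by blast
    then show False using nc by simp
  qed
  show ?thesis unfolding is_tree_def using sg' ne con' nc' by simp
qed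



definition N :: "'a set set \<Rightarrow> 'a \<Rightarrow> 'a set" where "N E a = {b. {a,b} \<in> E}"

lemma sg_finE: "simple_graph V E \<Longrightarrow> finite E"
proof -
  assume sg: "simple_graph V E"
  then have "E \<subseteq> Pow V" unfolding simple_graph_def by auto
  then show "finite E" using sg unfolding simple_graph_def by (meson finite_Pow_iff finite_subset)
qed

lemma N_sub: "simple_graph V E \<Longrightarrow> N E a \<subseteq> V"
  unfolding N_def using sg_edge by fastforce

lemma deg_N: assumes sg: "simple_graph V E" shows "degree E a = card (N E a)"
proof -
  have "bij_betw (\<lambda>b. {a,b}) (N E a) {e\<in>E. a\<in>e}"
    unfolding bij_betw_def inj_on_def N_def
  proof (intro conjI ballI impI)
    show "(\<lambda>b. {a, b}) ` {b. {a, b} \<in> E} = {e \<in> E. a \<in> e}"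
    proof
      show "{e \<in> E. a \<in> e} \<subseteq> (\<lambda>b. {a, b}) ` {b. {a, b} \<in> E}"
      proof
        fix e assume e: "e \<in> {e \<in> E. a \<in> e}"
        then obtain u v where "e = {u,v}" using sg unfolding simple_graph_def by blast
        then show "e \<in> (\<lambda>b. {a, b}) ` {b. {a, b} \<in> E}" using e
          by (auto simp: insert_commute image_iff)
      qed
    qed auto
  qed (auto simp: doubleton_eq_iff)
  then show ?thesis unfolding degree_def by (metis bij_betw_same_card)
qed

lemma card_swap: "finite A \<Longrightarrow> y \<in> A \<Longrightarrow> x \<notin> A \<Longrightarrow> card (insert x (A - {y})) = card A"
proof -
  assume a: "finite A" "y \<in> A" "x \<notin> A"
  then have "card (insert x (A - {y})) = Suc (card (A - {y}))" by (simp add: card_insert_disjoint)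
  also have "\<dots> = card A" using a card_gt_0_iff[of A] by (auto simp: card_Diff_singleton)
  finally show ?thesis .
qed

lemma switch:
  assumes R: "is_realization d E"
    and ac: "{a,c} \<in> E" and be: "{b,e} \<in> E" and ab: "{a,b} \<notin> E" and ce: "{c,e} \<notin> E"
    and dist: "a \<noteq> b" "a \<noteq> c" "a \<noteq> e" "b \<noteq> c" "b \<noteq> e" "c \<noteq> e"
  shows "is_realization d (insert {a,b} (insert {c,e} (E - {{a,c},{b,e}})))"
proof -
  let ?V = "{0..<length d}"
  let ?E = "insert {a,b} (insert {c,e} (E - {{a,c},{b,e}}))"
  have sg: "simple_graph ?V E" and dg: "\<forall>i<length d. degree E i = d ! i"
    using R unfolding is_realization_def by auto
  have V: "a \<in> ?V" "b \<in> ?V" "c \<in> ?V" "e \<in> ?V" using sg_edge[OF sg ac] sg_edge[OF sg be] by auto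
  have sg2: "simple_graph ?V ?E" using sg V dist unfolding simple_graph_def by auto
  have finN: "finite (N E v)" for v using N_sub[OF sg] by (meson finite_atLeastLessThan finite_subset)
  have sym: "{x,y} \<in> F \<longleftrightarrow> {y,x} \<in> F" for x y :: nat and F by (simp add: insert_commute)
  have Nv: "card (N ?E v) = card (N E v)" for v
  proof -
    consider "v = a" | "v = b" | "v = c" | "v = e" | "v \<notin> {a,b,c,e}" by auto
    then show ?thesis
    proof cases
      case 1
      have "N ?E v = insert b (N E a - {c})" using 1 dist unfolding N_def by (auto simp: doubleton_eq_iff)
      moreover have "c \<in> N E a" "b \<notin> N E a" using ac ab unfolding N_def by auto
      ultimately show ?thesis using card_swap[OF finN] 1 by simp
    next
      case 2
      have "N ?E v = insert a (N E b - {e})" using 2 dist unfolding N_def by (auto simp: doubleton_eq_iff)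
      moreover have "e \<in> N E b" "a \<notin> N E b" using be ab sym unfolding N_def by auto
      ultimately show ?thesis using card_swap[OF finN] 2 by simp
    next
      case 3
      have "N ?E v = insert e (N E c - {a})" using 3 dist unfolding N_def by (auto simp: doubleton_eq_iff)
      moreover have "a \<in> N E c" "e \<notin> N E c" using ac ce sym unfolding N_def by auto
      ultimately show ?thesis using card_swap[OF finN] 3 by simp
    next
      case 4
      have "N ?E v = insert c (N E e - {b})" using 4 dist unfolding N_def by (auto simp: doubleton_eq_iff)
      moreover have "b \<in> N E e" "c \<notin> N E e" using be ce sym unfolding N_def by auto
      ultimately show ?thesis using card_swap[OF finN] 4 by simp
    next
      case 5
      then have "N ?E v = N E v" unfolding N_def by (auto simp: doubleton_eq_iff)
      then show ?thesis by simp
    qed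
  qed
  show ?thesis unfolding is_realization_def
    using sg2 dg Nv deg_N[OF sg] deg_N[OF sg2] by simp
qed



lemma real_deg: "is_realization d E \<Longrightarrow> v < length d \<Longrightarrow> card (N E v) = d ! v"
  unfolding is_realization_def using deg_N by metis

lemma ext:
  assumes R: "is_realization d E" and U: "U \<subseteq> {0..<length d}" and cU: "card U + 2 \<le> t"
    and aU: "a \<in> U" and da: "t - 1 \<le> d ! a"
    and Hc: "t - 1 \<le> card {i. i < length d \<and> t - 1 \<le> d ! i}"
  shows "\<exists>E2 b. is_realization d E2 \<and> b < length d \<and> t - 1 \<le> d ! b \<and> b \<notin> U \<and> {a,b} \<in> E2
           \<and> (\<forall>x\<in>E. x \<subseteq> U \<longrightarrow> x \<in> E2)"
proof -
  let ?H = "{i. i < length d \<and> t - 1 \<le> d ! i}"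
  have sg: "simple_graph {0..<length d} E" using R unfolding is_realization_def by auto
  have finU: "finite U" using U finite_subset by blast
  have finN: "finite (N E v)" for v using N_sub[OF sg] by (meson finite_atLeastLessThan finite_subset)
  have aN: "a < length d" using U aU by auto
  show ?thesis
  proof (cases "\<exists>b\<in>?H - U. {a,b} \<in> E")
    case True
    then show ?thesis using R by blast
  next
    case False
    have "\<not> ?H \<subseteq> U"
    proof
      assume "?H \<subseteq> U"
      then have "card ?H \<le> card U" using finU by (simp add: card_mono)
      then show False using Hc cU by linarith
    qed
    then obtain b where b: "b \<in> ?H" "b \<notin> U" by blast
    have ab: "{a,b} \<notin> E" using False b by blast
    have cNa: "card (N E a) \<ge> t - 1" using real_deg[OF R aN] da by simp
    have aNa: "a \<notin> N E a" unfolding N_def using sg_edge[OF sg] by blast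
    have "\<not> N E a \<subseteq> U"
    proof
      assume "N E a \<subseteq> U"
      then have "N E a \<subseteq> U - {a}" using aNa by auto
      then have "card (N E a) \<le> card (U - {a})" using finU by (simp add: card_mono)
      also have "\<dots> = card U - 1" using aU finU by simp
      finally show False using cNa cU by linarith
    qed
    then obtain c where c: "c \<in> N E a" "c \<notin> U" by blast
    have ac: "{a,c} \<in> E" using c unfolding N_def by auto
    have cN: "c < length d" "a \<noteq> c" using sg_edge[OF sg ac] by auto
    have cH: "c \<notin> ?H" using False c ac by blast
    then have dc: "d ! c < t - 1" using cN by auto
    have bN: "b < length d" "t - 1 \<le> d ! b" using b by auto
    have "\<exists>e \<in> N E b. e \<noteq> c \<and> {c,e} \<notin> E"
    proof (rule ccontr)
      assume "\<not> ?thesis"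
      then have sub: "N E b - {c} \<subseteq> N E c" unfolding N_def by auto
      have aNb: "a \<notin> N E b" using ab unfolding N_def by (simp add: insert_commute)
      have aNc: "a \<in> N E c" using ac unfolding N_def by (simp add: insert_commute)
      have "insert a (N E b - {c}) \<subseteq> N E c" using sub aNc by auto
      then have "card (insert a (N E b - {c})) \<le> card (N E c)" using finN by (simp add: card_mono)
      moreover have "card (insert a (N E b - {c})) = Suc (card (N E b - {c}))"
        using aNb finN by simp
      moreover have "card (N E b - {c}) \<ge> card (N E b) - 1"
        by (metis card_Diff_singleton diff_le_self finN le_refl Diff_empty Diff_insert0 card_Diff1_le)
      ultimately have "card (N E c) \<ge> card (N E b)"
        by linarith
      then show False using real_deg[OF R bN(1)] real_deg[OF R cN(1)] dc bN(2) by linarith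
    qed
    then obtain e where e: "e \<in> N E b" "e \<noteq> c" "{c,e} \<notin> E" by blast
    have be: "{b,e} \<in> E" using e unfolding N_def by auto
    have dist: "a \<noteq> b" "a \<noteq> e" "b \<noteq> c" "b \<noteq> e"
      using aU b ab be sg_edge[OF sg be] c aNa
      by (auto simp: N_def insert_commute)
    let ?E = "insert {a,b} (insert {c,e} (E - {{a,c},{b,e}}))"
    have R2: "is_realization d ?E" using switch[OF R ac be ab e(3) dist(1) cN(2) dist(2-4) e(2)[symmetric]] .
    have prot: "\<forall>x\<in>E. x \<subseteq> U \<longrightarrow> x \<in> ?E" using c b by auto
    show ?thesis using R2 prot bN b(2) by blast
  qed
qed



lemma extend_emb:
  assumes sg: "simple_graph VT ET" and l: "l \<in> VT" "p \<in> VT" "l \<noteq> p"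
    and lf: "\<forall>w. {l,w} \<in> ET \<longrightarrow> w = p"
    and inj: "inj_on f (VT - {l})"
    and emb: "\<forall>u\<in>VT-{l}. \<forall>v\<in>VT-{l}. {u,v} \<in> {e\<in>ET. l\<notin>e} \<longrightarrow> {f u, f v} \<in> E"
    and b: "b \<notin> f`(VT-{l})" "{f p, b} \<in> E"
  shows "inj_on (f(l:=b)) VT \<and> (f(l:=b))`VT = insert b (f`(VT-{l}))
     \<and> (\<forall>u\<in>VT. \<forall>v\<in>VT. {u,v}\<in>ET \<longrightarrow> {(f(l:=b)) u, (f(l:=b)) v} \<in> E)"
proof (intro conjI ballI impI)
  have VT: "VT = insert l (VT - {l})" using l by auto
  have im: "(f(l:=b))`(VT-{l}) = f`(VT-{l})" by auto
  have inj2: "inj_on (f(l:=b)) (VT-{l})" using inj unfolding inj_on_def by auto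
  show "inj_on (f(l:=b)) VT" using inj2 im b(1) VT by (metis Diff_idemp fun_upd_same inj_on_insert)
  show "(f(l:=b))`VT = insert b (f`(VT-{l}))" using im VT by (metis fun_upd_same image_insert)
  fix u v assume uv: "u \<in> VT" "v \<in> VT" "{u,v} \<in> ET"
  have lp: "w = p" if "{l,w} \<in> ET" for w using lf that by auto
  have sym: "{f p, b} = {b, f p}" by auto
  show "{(f(l:=b)) u, (f(l:=b)) v} \<in> E"
  proof (cases "u = l")
    case True
    then have "v = p" using lp uv by auto
    then show ?thesis using True l b by (auto simp: insert_commute)
  next
    case F1: False
    show ?thesis
    proof (cases "v = l")
      case True
      then have "u = p" using lp uv by (auto simp: insert_commute)
      then show ?thesis using True l b by (auto simp: insert_commute)
    next
      case False
      then show ?thesis using F1 emb uv by auto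
    qed
  qed
qed

lemma embed:
  assumes G: "graphic d" and t2: "t \<ge> 2"
    and Hc: "t - 1 \<le> card {i. i < length d \<and> t - 1 \<le> d ! i}"
  shows "\<forall>(VT::'a set) ET. is_tree VT ET \<longrightarrow> card VT = s \<longrightarrow> s + 1 \<le> t \<longrightarrow>
    (\<exists>E f. is_realization d E \<and> inj_on f VT \<and> f`VT \<subseteq> {i. i < length d \<and> t - 1 \<le> d ! i}
      \<and> (\<forall>u\<in>VT. \<forall>v\<in>VT. {u,v}\<in>ET \<longrightarrow> {f u, f v} \<in> E))"
proof (induction s)
  case 0
  then show ?case unfolding is_tree_def simple_graph_def by auto
next
  case (Suc m)
  let ?H = "{i. i < length d \<and> t - 1 \<le> d ! i}"
  show ?case
  proof (intro allI impI)
    fix VT :: "'a set" and ET assume T: "is_tree VT ET" and cT: "card VT = Suc m" and st: "Suc m + 1 \<le> t"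
    have sg: "simple_graph VT ET" using T unfolding is_tree_def by auto
    show "\<exists>E f. is_realization d E \<and> inj_on f VT \<and> f`VT \<subseteq> ?H
      \<and> (\<forall>u\<in>VT. \<forall>v\<in>VT. {u,v}\<in>ET \<longrightarrow> {f u, f v} \<in> E)"
    proof (cases m)
      case 0
      then obtain x where x: "VT = {x}" using cT card_1_singletonE by auto
      obtain E where E: "is_realization d E" using G unfolding graphic_def by auto
      have "?H \<noteq> {}" proof
        assume "?H = {}" then have "card ?H = 0" by simp
        then show False using Hc t2 by linarith
      qed
      then obtain h where h: "h \<in> ?H" by blast
      have "\<forall>u\<in>VT. \<forall>v\<in>VT. {u,v}\<in>ET \<longrightarrow> {h, h} \<in> E" using x sg_edge[OF sg, of x x] by auto
      then show ?thesis using E h x by (intro exI[of _ E] exI[of _ "\<lambda>_. h"]) auto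
    next
      case (Suc k)
      have c2: "card VT \<ge> 2" using cT Suc by auto
      obtain l p where l: "l \<in> VT" "p \<in> VT" "l \<noteq> p" "{l,p} \<in> ET" and lf: "\<forall>w. {l,w} \<in> ET \<longrightarrow> w = p"
        using tree_leaf[OF T c2] by blast
      have T': "is_tree (VT - {l}) {e \<in> ET. l \<notin> e}" using tree_remove[OF T c2 l lf] .
      have fin: "finite VT" using sg unfolding simple_graph_def by auto
      have cT': "card (VT - {l}) = m" using cT l fin by simp
      obtain E f where E: "is_realization d E" and inj: "inj_on f (VT - {l})"
        and im: "f`(VT - {l}) \<subseteq> ?H"
        and emb: "\<forall>u\<in>VT-{l}. \<forall>v\<in>VT-{l}. {u,v} \<in> {e\<in>ET. l\<notin>e} \<longrightarrow> {f u, f v} \<in> E"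
        using Suc.IH T' cT' st by fastforce
      let ?U = "f`(VT - {l})"
      have cU: "card ?U = m" using card_image[OF inj] cT' by simp
      have pU: "f p \<in> ?U" using l by auto
      have Usub: "?U \<subseteq> {0..<length d}" using im by auto
      have dp: "t - 1 \<le> d ! (f p)" using im pU by auto
      obtain E2 b where E2: "is_realization d E2" "b < length d" "t - 1 \<le> d ! b" "b \<notin> ?U"
        "{f p, b} \<in> E2" and prot: "\<forall>x\<in>E. x \<subseteq> ?U \<longrightarrow> x \<in> E2"
        using ext[OF E Usub _ pU dp Hc] cU st by auto
      have emb2: "\<forall>u\<in>VT-{l}. \<forall>v\<in>VT-{l}. {u,v} \<in> {e\<in>ET. l\<notin>e} \<longrightarrow> {f u, f v} \<in> E2"
        using emb prot by auto
      note X = extend_emb[OF sg l(1-3) lf inj emb2 E2(4,5)]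
      show ?thesis using X E2 im by (intro exI[of _ E2] exI[of _ "f(l:=b)"]) auto
    qed
  qed
qed

theorem lemma13:
  fixes VT :: "'a set" and ET :: "'a set set" and d :: "nat list" and t n :: nat
  assumes "is_tree VT ET" and "card VT = t" and "t \<ge> 2"
    and "nonincreasing d" and "graphic d" and "length d = n" and "n \<ge> t"
    and "d ! (t - 2) \<ge> t - 1"
  shows "potentially_graphic VT ET d"
proof -
  note T = assms(1)
  let ?H = "{i. i < length d \<and> t - 1 \<le> d ! i}"
  have "{0..<t-1} \<subseteq> ?H"
  proof
    fix i assume i: "i \<in> {0..<t-1}"
    have "d ! (t-2) \<le> d ! i"
    proof (cases "i = t - 2")
      case False
      then have "i < t - 2" using i by auto
      then show ?thesis using sorted_wrt_nth_less[of "(\<ge>)" d i "t-2"] assms(4,6,7,3)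
        unfolding nonincreasing_def by auto
    qed simp
    then show "i \<in> ?H" using i assms(6,7,8) by auto
  qed
  then have Hc: "t - 1 \<le> card ?H" by (metis card_atLeastLessThan card_mono finite_Collect_conjI finite_Collect_less_nat diff_zero)
  have sg: "simple_graph VT ET" using T unfolding is_tree_def by auto
  have c2: "card VT \<ge> 2" using assms by simp
  obtain l p where l: "l \<in> VT" "p \<in> VT" "l \<noteq> p" "{l,p} \<in> ET" and lf: "\<forall>w. {l,w} \<in> ET \<longrightarrow> w = p"
    using tree_leaf[OF T c2] by blast
  have T': "is_tree (VT - {l}) {e \<in> ET. l \<notin> e}" using tree_remove[OF T c2 l lf] .
  have fin: "finite VT" using sg unfolding simple_graph_def by auto
  have cT': "card (VT - {l}) = t - 1" using assms(2) l fin by simp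
  obtain E f where E: "is_realization d E" and inj: "inj_on f (VT - {l})"
    and im: "f`(VT - {l}) \<subseteq> ?H"
    and emb: "\<forall>u\<in>VT-{l}. \<forall>v\<in>VT-{l}. {u,v} \<in> {e\<in>ET. l\<notin>e} \<longrightarrow> {f u, f v} \<in> E"
    using embed[OF assms(5) assms(3) Hc, of "t - 1"] T' cT' assms(3) by fastforce
  let ?U = "f`(VT - {l})"
  have sgE: "simple_graph {0..<length d} E" using E unfolding is_realization_def by auto
  have cU: "card ?U = t - 1" using card_image[OF inj] cT' by simp
  have pU: "f p \<in> ?U" using l by auto
  have pN: "f p < length d" "t - 1 \<le> d ! (f p)" using im pU by auto
  have cNa: "card (N E (f p)) \<ge> t - 1" using real_deg[OF E pN(1)] pN(2) by simp
  have aNa: "f p \<notin> N E (f p)" unfolding N_def using sg_edge[OF sgE] by blast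
  have finU: "finite ?U" using fin by simp
  have "\<not> N E (f p) \<subseteq> ?U"
  proof
    assume "N E (f p) \<subseteq> ?U"
    then have "N E (f p) \<subseteq> ?U - {f p}" using aNa by auto
    then have "card (N E (f p)) \<le> card (?U - {f p})" using finU by (simp add: card_mono)
    also have "\<dots> = card ?U - 1" using pU finU by simp
    finally show False using cNa cU assms(3) by linarith
  qed
  then obtain b where b: "b \<in> N E (f p)" "b \<notin> ?U" by blast
  have bE: "{f p, b} \<in> E" using b unfolding N_def by auto
  note X = extend_emb[OF sg l(1-3) lf inj emb b(2) bE]
  have bN: "b < length d" using sg_edge[OF sgE bE] by auto
  have "contains_subgraph VT ET {0..<length d} E"
    unfolding contains_subgraph_def
    using X im bN by (intro exI[of _ "f(l:=b)"]) auto
  then show ?thesis unfolding potentially_graphic_def using E assms(5) by blast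
qed

end
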